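(* Let $3\le p<\omega$, $0\le n<\omega$, and let $\theta$ be a (square) representation of $\mathfrak L(p,n)$ over a set $D$. Then for all $x\in D$ and all $0\le i\le p$, $$p-1=|\theta(x,a_i)|\ge 2n-1.$$
   Context: For $3\le p<\omega$, $0\le n<\omega$, $\mathfrak L(p,n)$ is the finite symmetric integral relation algebra with atoms $1',a_0,\dots,a_p,t_1,\dots,t_n$ whose composition of atoms is given, for $0\le i,j\le p$, $i\ne j$, $1\le k,l\le n$, $k\ne l$, by: $a_i;a_i=1'+a_i$; $a_i;a_j=0'\cdot\overline{a_i+a_j}$ (where $0'=\overline{1'}$); $a_i;t_k=t_1+\cdots+t_n$; $t_k;t_k=1'+a_0+\cdots+a_p$; $t_k;t_l=a_0+\cdots+a_p$. A square representation over $D$ is an injective map $\theta$ from the algebra into $\mathcal P(D\times D)$ sending $0,1,\overline{\phantom{x}},+,\cdot,1',\breve{\ },;$ to $\emptyset$, $D\times D$, complement in $D\times D$, union, intersection, the identity relation on $D$, relational converse, and relational composition respectively. For $x\in D$ and $a\in\mathfrak L(p,n)$, $\theta(x,a)=\{y\in D:(x,y)\in a^\theta\}$. *)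

theory Defs
  imports Main
begin

text \<open>Atoms of the finite relation algebra L(p,n): the identity 1', a_0..a_p, t_1..t_n.\<close>
datatype atom = One | A nat | T nat

definition atoms :: "nat \<Rightarrow> nat \<Rightarrow> atom set" where
  "atoms p n = {One} \<union> {A i | i. i \<le> p} \<union> {T k | k. 1 \<le> k \<and> k \<le> n}"

definition Aset :: "nat \<Rightarrow> atom set" where
  "Aset p = {A i | i. i \<le> p}"

definition Tset :: "nat \<Rightarrow> atom set" where
  "Tset n = {T k | k. 1 \<le> k \<and> k \<le> n}"

fun atom_comp :: "nat \<Rightarrow> nat \<Rightarrow> atom \<Rightarrow> atom \<Rightarrow> atom set" where
  "atom_comp p n One x = {x}"
| "atom_comp p n x One = {x}"
| "atom_comp p n (A i) (A j) =
     (if i = j then {One, A i} else atoms p n - {One, A i, A j})"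
| "atom_comp p n (A i) (T k) = Tset n"
| "atom_comp p n (T k) (A i) = Tset n"
| "atom_comp p n (T k) (T l) =
     (if k = l then {One} \<union> Aset p else Aset p)"

text \<open>Elements of L(p,n) are the subsets of atoms p n; operations of the algebra.\<close>
definition L_comp :: "nat \<Rightarrow> nat \<Rightarrow> atom set \<Rightarrow> atom set \<Rightarrow> atom set" where
  "L_comp p n X Y = (\<Union>x\<in>X. \<Union>y\<in>Y. atom_comp p n x y)"

definition L_conv :: "atom set \<Rightarrow> atom set" where
  "L_conv X = X"  \<comment> \<open>every atom is self-converse (symmetric algebra)\<close>

definition L_compl :: "nat \<Rightarrow> nat \<Rightarrow> atom set \<Rightarrow> atom set" where
  "L_compl p n X = atoms p n - X"

definition is_square_rep ::
  "nat \<Rightarrow> nat \<Rightarrow> 'd set \<Rightarrow> (atom set \<Rightarrow> ('d \<times> 'd) set) \<Rightarrow> bool" where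
  "is_square_rep p n D \<theta> \<longleftrightarrow>
     inj_on \<theta> (Pow (atoms p n)) \<and>
     (\<forall>X\<in>Pow (atoms p n). \<theta> X \<subseteq> D \<times> D) \<and>
     \<theta> {} = {} \<and>
     \<theta> (atoms p n) = D \<times> D \<and>
     (\<forall>X\<in>Pow (atoms p n). \<theta> (L_compl p n X) = (D \<times> D) - \<theta> X) \<and>
     (\<forall>X\<in>Pow (atoms p n). \<forall>Y\<in>Pow (atoms p n). \<theta> (X \<union> Y) = \<theta> X \<union> \<theta> Y) \<and>
     (\<forall>X\<in>Pow (atoms p n). \<forall>Y\<in>Pow (atoms p n). \<theta> (X \<inter> Y) = \<theta> X \<inter> \<theta> Y) \<and>
     \<theta> {One} = Id_on D \<and>
     (\<forall>X\<in>Pow (atoms p n). \<theta> (L_conv X) = converse (\<theta> X)) \<and>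
     (\<forall>X\<in>Pow (atoms p n). \<forall>Y\<in>Pow (atoms p n). \<theta> (L_comp p n X Y) = \<theta> X O \<theta> Y)"

definition rep_nbhd :: "'d set \<Rightarrow> (atom set \<Rightarrow> ('d \<times> 'd) set) \<Rightarrow> 'd \<Rightarrow> atom set \<Rightarrow> 'd set" where
  "rep_nbhd D \<theta> x a = {y \<in> D. (x, y) \<in> \<theta> a}"

end

theory Submission
  imports Defs
begin

lemma atoms_simps[simp]: "One \<in> atoms p n" "A i \<in> atoms p n \<longleftrightarrow> i \<le> p"
  "T k \<in> atoms p n \<longleftrightarrow> 1 \<le> k \<and> k \<le> n"
  by (auto simp: atoms_def)

lemma atoms_eq: "atoms p n = insert One (A ` {..p} \<union> T ` {1..n})"
  by (auto simp: atoms_def)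

lemma finite_atoms: "finite (atoms p n)"
  by (simp add: atoms_eq)

lemma atom_comp_sub: "a \<in> atoms p n \<Longrightarrow> b \<in> atoms p n \<Longrightarrow> atom_comp p n a b \<subseteq> atoms p n"
  by (cases a; cases b) (auto simp: Aset_def Tset_def)

context
  fixes p n :: nat and D :: "'d set" and \<theta> :: "atom set \<Rightarrow> ('d \<times> 'd) set"
  assumes rep: "is_square_rep p n D \<theta>"
begin

lemma rep_union: "S \<subseteq> atoms p n \<Longrightarrow> \<theta> S = (\<Union>a\<in>S. \<theta> {a})"
proof -
  assume sub: "S \<subseteq> atoms p n"
  have fin: "finite S" using finite_subset[OF sub finite_atoms] .
  from fin sub show ?thesis
  proof (induction S rule: finite_induct)
    case empty
    then show ?case using rep by (simp add: is_square_rep_def)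
  next
    case (insert a S)
    have "\<theta> (insert a S) = \<theta> ({a} \<union> S)" by simp
    also have "\<dots> = \<theta> {a} \<union> \<theta> S"
    proof -
      have "\<forall>X\<in>Pow (atoms p n). \<forall>Y\<in>Pow (atoms p n). \<theta> (X \<union> Y) = \<theta> X \<union> \<theta> Y"
        using rep unfolding is_square_rep_def by blast
      moreover have "{a} \<in> Pow (atoms p n)" "S \<in> Pow (atoms p n)" using insert.prems by auto
      ultimately show ?thesis by blast
    qed
    also have "\<dots> = (\<Union>b\<in>insert a S. \<theta> {b})" using insert by auto
    finally show ?case .
  qed
qed

lemma rep_D: "a \<in> atoms p n \<Longrightarrow> (u,v) \<in> \<theta> {a} \<Longrightarrow> u \<in> D \<and> v \<in> D"
proof -
  assume "a \<in> atoms p n" "(u,v) \<in> \<theta> {a}"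
  moreover have "\<theta> {a} \<subseteq> D \<times> D" using rep \<open>a \<in> atoms p n\<close> unfolding is_square_rep_def by auto
  ultimately show ?thesis by auto
qed

lemma rep_sym: "a \<in> atoms p n \<Longrightarrow> (u,v) \<in> \<theta> {a} \<Longrightarrow> (v,u) \<in> \<theta> {a}"
proof -
  assume "a \<in> atoms p n" "(u,v) \<in> \<theta> {a}"
  moreover have "\<theta> {a} = converse (\<theta> {a})"
  proof -
    have "\<forall>X\<in>Pow (atoms p n). \<theta> (L_conv X) = converse (\<theta> X)"
      using rep unfolding is_square_rep_def by blast
    then show ?thesis using \<open>a \<in> atoms p n\<close> unfolding L_conv_def by auto
  qed
  ultimately show ?thesis by blast
qed

lemma rep_disj: "a \<in> atoms p n \<Longrightarrow> b \<in> atoms p n \<Longrightarrow> a \<noteq> b \<Longrightarrow> (u,v) \<in> \<theta> {a} \<Longrightarrow> (u,v) \<in> \<theta> {b} \<Longrightarrow> False"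
proof -
  assume h: "a \<in> atoms p n" "b \<in> atoms p n" "a \<noteq> b" "(u,v) \<in> \<theta> {a}" "(u,v) \<in> \<theta> {b}"
  have "\<forall>X\<in>Pow (atoms p n). \<forall>Y\<in>Pow (atoms p n). \<theta> (X \<inter> Y) = \<theta> X \<inter> \<theta> Y"
    using rep unfolding is_square_rep_def by blast
  then have "\<theta> ({a} \<inter> {b}) = \<theta> {a} \<inter> \<theta> {b}" using h by blast
  moreover have "\<theta> ({a} \<inter> {b}) = {}" using h rep unfolding is_square_rep_def by auto
  ultimately show False using h by auto
qed

lemma rep_One: "\<theta> {One} = Id_on D"
  using rep unfolding is_square_rep_def by auto

lemma rep_comp: "a \<in> atoms p n \<Longrightarrow> b \<in> atoms p n \<Longrightarrow>
   \<theta> {a} O \<theta> {b} = (\<Union>c\<in>atom_comp p n a b. \<theta> {c})"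
proof -
  assume h: "a \<in> atoms p n" "b \<in> atoms p n"
  have "\<theta> (L_comp p n {a} {b}) = \<theta> {a} O \<theta> {b}" using rep h unfolding is_square_rep_def by auto
  moreover have "L_comp p n {a} {b} = atom_comp p n a b" by (simp add: L_comp_def)
  ultimately show ?thesis using rep_union[OF atom_comp_sub[OF h]] by simp
qed

lemma comp_elim: "a \<in> atoms p n \<Longrightarrow> b \<in> atoms p n \<Longrightarrow> (u,v) \<in> \<theta> {a} \<Longrightarrow> (v,w) \<in> \<theta> {b}
  \<Longrightarrow> \<exists>c\<in>atom_comp p n a b. (u,w) \<in> \<theta> {c}"
  using rep_comp by blast

lemma comp_intro: "a \<in> atoms p n \<Longrightarrow> b \<in> atoms p n \<Longrightarrow> c \<in> atom_comp p n a b \<Longrightarrow> (u,w) \<in> \<theta> {c}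
  \<Longrightarrow> \<exists>v. (u,v) \<in> \<theta> {a} \<and> (v,w) \<in> \<theta> {b}"
  using rep_comp by blast

lemma irrefl_A: "i \<le> p \<Longrightarrow> (u,u) \<notin> \<theta> {A i}"
proof
  assume h: "i \<le> p" "(u,u) \<in> \<theta> {A i}"
  then have "u \<in> D" using rep_D[of "A i" u u] by simp
  then have "(u,u) \<in> \<theta> {One}" using rep_One by auto
  then show False using rep_disj[of One "A i" u u] h by auto
qed

lemma cliq2: "i \<le> p \<Longrightarrow> (x,z) \<in> \<theta> {A i} \<Longrightarrow> (z,w) \<in> \<theta> {A i} \<Longrightarrow> w = x \<or> (x,w) \<in> \<theta> {A i}"
proof -
  assume h: "i \<le> p" "(x,z) \<in> \<theta> {A i}" "(z,w) \<in> \<theta> {A i}"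
  from comp_elim[OF _ _ h(2,3)] h(1) obtain c where "c \<in> {One, A i}" "(x,w) \<in> \<theta> {c}" by auto
  then show ?thesis using rep_One by auto
qed

lemma cliq: "i \<le> p \<Longrightarrow> (x,y) \<in> \<theta> {A i} \<Longrightarrow> (x,z) \<in> \<theta> {A i} \<Longrightarrow> y \<noteq> z \<Longrightarrow> (y,z) \<in> \<theta> {A i}"
  using cliq2[of i y x z] rep_sym[of "A i" x y] by auto


lemma part1:
  assumes p3: "3 \<le> p" and xD: "x \<in> D" and ip: "i \<le> p"
  defines "N \<equiv> rep_nbhd D \<theta> x {A i}"
  shows "finite N \<and> x \<notin> N \<and> card (insert x N) = p"
proof -
  define k where "k = (if i = 0 then 1 else (0::nat))"
  have kp: "k \<le> p" "k \<noteq> i" using p3 by (auto simp: k_def)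
  have "(x,x) \<in> \<theta> {One}" using rep_One xD by auto
  then obtain y where xy: "(x,y) \<in> \<theta> {A k}"
    using comp_intro[of "A k" "A k" One x x] kp by auto
  define C where "C = insert x N"
  have Nmem: "z \<in> N \<longleftrightarrow> (x,z) \<in> \<theta> {A i}" for z
    unfolding N_def rep_nbhd_def using rep_D[of "A i" x z] ip by auto
  have ex: "\<exists>l. l \<le> p \<and> l \<noteq> i \<and> (z,y) \<in> \<theta> {A l}" if "z \<in> C" for z
  proof (cases "z = x")
    case True then show ?thesis using xy kp by auto
  next
    case False
    then have xz: "(x,z) \<in> \<theta> {A i}" using that Nmem C_def by auto
    then have zx: "(z,x) \<in> \<theta> {A i}" using rep_sym ip by auto
    from comp_elim[OF _ _ zx xy] ip kp obtain c where
      c: "c \<in> atoms p n - {One, A i, A k}" "(z,y) \<in> \<theta> {c}" by auto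
    show ?thesis
    proof (cases c)
      case One then show ?thesis using c by auto
    next
      case (A l) then show ?thesis using c by auto
    next
      case (T m)
      from comp_elim[OF _ _ xz c(2)] c(1) ip obtain c' where
        "c' \<in> Tset n" "(x,y) \<in> \<theta> {c'}" using T by auto
      then show ?thesis using rep_disj[of c' "A k" x y] xy kp by (auto simp: Tset_def)
    qed
  qed
  have uniq: "l = l'" if "l \<le> p" "l' \<le> p" "(z,y) \<in> \<theta> {A l}" "(z,y) \<in> \<theta> {A l'}" for z l l'
    using rep_disj[of "A l" "A l'" z y] that by auto
  have Ai: "(z,z') \<in> \<theta> {A i}" if "z \<in> C" "z' \<in> C" "z \<noteq> z'" for z z'
    using that cliq[OF ip, of x z z'] Nmem rep_sym[of "A i" x] ip C_def by auto
  define f where "f z = (SOME l. l \<le> p \<and> l \<noteq> i \<and> (z,y) \<in> \<theta> {A l})" for z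
  have fprop: "f z \<le> p \<and> f z \<noteq> i \<and> (z,y) \<in> \<theta> {A (f z)}" if "z \<in> C" for z
    unfolding f_def using someI_ex[OF ex[OF that]] .
  have inj: "inj_on f C"
  proof (rule inj_onI)
    fix z z' assume h: "z \<in> C" "z' \<in> C" "f z = f z'"
    show "z = z'"
    proof (rule ccontr)
      assume ne: "z \<noteq> z'"
      let ?l = "f z"
      have a: "(z,y) \<in> \<theta> {A ?l}" "(y,z') \<in> \<theta> {A ?l}" "?l \<le> p" "?l \<noteq> i"
        using fprop[OF h(1)] fprop[OF h(2)] h(3) rep_sym[of "A ?l" z' y] by auto
      from comp_elim[OF _ _ a(1,2)] a(3) obtain c where
        "c \<in> {One, A ?l}" "(z,z') \<in> \<theta> {c}" by auto
      then show False using rep_One ne rep_disj[of "A ?l" "A i" z z'] Ai[OF h(1,2) ne] a ip by auto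
    qed
  qed
  have img: "f ` C = {l. l \<le> p \<and> l \<noteq> i}"
  proof
    show "f ` C \<subseteq> {l. l \<le> p \<and> l \<noteq> i}" using fprop by auto
  next
    show "{l. l \<le> p \<and> l \<noteq> i} \<subseteq> f ` C"
    proof
      fix l assume l: "l \<in> {l. l \<le> p \<and> l \<noteq> i}"
      have "\<exists>z\<in>C. (z,y) \<in> \<theta> {A l}"
      proof (cases "l = k")
        case True then show ?thesis using xy C_def by auto
      next
        case False
        have "A k \<in> atom_comp p n (A i) (A l)" using l kp False by auto
        from comp_intro[OF _ _ this xy] l ip obtain z where
          "(x,z) \<in> \<theta> {A i}" "(z,y) \<in> \<theta> {A l}" by auto
        then show ?thesis using Nmem C_def by auto
      qed
      then obtain z where z: "z \<in> C" "(z,y) \<in> \<theta> {A l}" by auto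
      then have "f z = l" using fprop[OF z(1)] uniq l by auto
      then show "l \<in> f ` C" using z by auto
    qed
  qed
  have "{l. l \<le> p \<and> l \<noteq> i} = {..p} - {i}" by auto
  then have cardS: "card {l. l \<le> p \<and> l \<noteq> i} = p" using ip by simp
  have finC: "finite C"
    using finite_imageD[of f C] inj img by simp
  have "card C = p" using card_image[OF inj] img cardS by simp
  moreover have "x \<notin> N" using Nmem irrefl_A ip by auto
  ultimately show ?thesis using finC C_def by auto
qed

lemma part2:
  assumes p3: "3 \<le> p" and xD: "x \<in> D" and ip: "i \<le> p" and n1: "1 \<le> n"
  defines "N \<equiv> rep_nbhd D \<theta> x {A i}"
  shows "2 * n \<le> card (insert x N)"
proof -
  define C where "C = insert x N"
  have finC: "finite C" using part1[OF p3 xD ip] N_def C_def by auto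
  have Nmem: "z \<in> N \<longleftrightarrow> (x,z) \<in> \<theta> {A i}" for z
    unfolding N_def rep_nbhd_def using rep_D[of "A i" x z] ip by auto
  have "(x,x) \<in> \<theta> {One}" using rep_One xD by auto
  then obtain y where xy: "(x,y) \<in> \<theta> {T 1}"
    using comp_intro[of "T 1" "T 1" One x x] n1 by auto
  define S where "S l = {z \<in> C. (z,y) \<in> \<theta> {T l}}" for l
  have S2: "2 \<le> card (S l)" if l: "l \<in> {1..n}" for l
  proof -
    have "T 1 \<in> atom_comp p n (A i) (T l)" using n1 by (simp add: Tset_def)
    from comp_intro[OF _ _ this xy] l ip obtain z where
      z: "(x,z) \<in> \<theta> {A i}" "(z,y) \<in> \<theta> {T l}" by auto
    have "T l \<in> atom_comp p n (A i) (T l)" using l by (simp add: Tset_def)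
    from comp_intro[OF _ _ this z(2)] l ip obtain z' where
      z': "(z,z') \<in> \<theta> {A i}" "(z',y) \<in> \<theta> {T l}" by auto
    have "z' \<in> C" using cliq2[OF ip z(1) z'(1)] Nmem C_def by auto
    moreover have "z \<in> C" using z Nmem C_def by auto
    moreover have "z \<noteq> z'" using z'(1) irrefl_A ip by auto
    ultimately have "{z,z'} \<subseteq> S l" using z z' S_def by auto
    moreover have "finite (S l)" using finC S_def by auto
    ultimately have "card {z,z'} \<le> card (S l)" by (rule card_mono[rotated])
    then show ?thesis using \<open>z \<noteq> z'\<close> by simp
  qed
  have disj: "S l \<inter> S l' = {}" if "l \<in> {1..n}" "l' \<in> {1..n}" "l \<noteq> l'" for l l'
    using rep_disj[of "T l" "T l'"] that S_def by auto
  have "card (\<Union>l\<in>{1..n}. S l) = (\<Sum>l\<in>{1..n}. card (S l))"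
    by (rule card_UN_disjoint) (use finC S_def disj in auto)
  moreover have "(\<Sum>l\<in>{1..n}. card (S l)) \<ge> (\<Sum>l\<in>{1..n}. 2)"
    by (rule sum_mono) (use S2 in auto)
  moreover have "card (\<Union>l\<in>{1..n}. S l) \<le> card C"
    by (rule card_mono) (use finC S_def in auto)
  ultimately show ?thesis using C_def by (simp add: mult.commute)
qed

end

theorem lemma6:
  fixes p n :: nat and D :: "'d set" and \<theta> :: "atom set \<Rightarrow> ('d \<times> 'd) set"
  assumes "3 \<le> p"
    and "is_square_rep p n D \<theta>"
    and "x \<in> D" and "i \<le> p"
  shows "card (rep_nbhd D \<theta> x {A i}) = p - 1
       \<and> int p - 1 \<ge> 2 * int n - 1"
proof -
  have P: "finite (rep_nbhd D \<theta> x {A i}) \<and> x \<notin> rep_nbhd D \<theta> x {A i}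
     \<and> card (insert x (rep_nbhd D \<theta> x {A i})) = p"
    using part1[OF assms(2,1,3,4)] by blast
  then have c: "card (rep_nbhd D \<theta> x {A i}) = p - 1" using card_insert_disjoint by fastforce
  have "2 * n \<le> p"
  proof (cases "n = 0")
    case True then show ?thesis by simp
  next
    case False
    then show ?thesis using part2[OF assms(2,1,3,4)] P by simp
  qed
  then show ?thesis using c by simp
qed

end
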